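(* Let $\phi:\mathbb{R}^n\to\mathbb{R}\cup\{+\infty\}$ be $m_\phi$-weakly convex (possibly nonsmooth) and let $g:\mathbb{R}^n\to\mathbb{R}\cup\{+\infty\}$ be proper, closed and convex; set $\Psi:=\phi-g$. For $0<\mu<1/m_\phi$ define $\Psi_\mu(\bm z):=\mathcal{M}_{\mu\phi}(\bm z)-\mathcal{M}_{\mu g}(\bm z)$, which is continuously differentiable. Let $\varepsilon>0$ and $0<\mu<1/m_\phi$. If $\bar{\bm z}\in\mathbb{R}^n$ satisfies $\|\nabla\Psi_\mu(\bar{\bm z})\|\le\min\{1,\mu^{-1}\}\varepsilon$, then $\bar{\bm x}:=\mathrm{prox}_{\mu\phi}(\bar{\bm z})$ is an $\varepsilon$-critical point of $\Psi$ with auxiliary point $\bar{\bm y}:=\mathrm{prox}_{\mu g}(\bar{\bm z})$, i.e. there exists $\bar{\bm u}\in\partial\phi(\bar{\bm x})-\partial g(\bar{\bm y})$ with $\max\{\|\bar{\bm u}\|,\|\bar{\bm x}-\bar{\bm y}\|\}\le\varepsilon$.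
   Context: A function $\phi$ is $m_\phi$-weakly convex if $\phi+\frac{m_\phi}{2}\|\cdot\|^2$ is convex. For a function $\varphi$ and $\mu>0$, the Moreau envelope and proximal mapping are $\mathcal{M}_{\mu\varphi}(\bm z):=\min_{\bm x}\{\varphi(\bm x)+\frac{1}{2\mu}\|\bm x-\bm z\|^2\}$ and $\mathrm{prox}_{\mu\varphi}(\bm z):=\arg\min_{\bm x}\{\varphi(\bm x)+\frac{1}{2\mu}\|\bm x-\bm z\|^2\}$ (well-defined and single-valued for $\mu\in(0,1/m_\phi)$ in the weakly convex case). $\partial$ denotes the general (limiting) subdifferential, which coincides with the convex subdifferential for convex functions. A point $\bar{\bm x}$ is an $\varepsilon$-critical point of $\Psi=\phi-g$ if there exist $\bar{\bm y}\in\mathbb{R}^n$ and $\bar{\bm u}\in\partial\phi(\bar{\bm x})-\partial g(\bar{\bm y})$ with $\max\{\|\bar{\bm u}\|,\|\bar{\bm x}-\bar{\bm y}\|\}\le\varepsilon$. Norms are Euclidean. *)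

theory Defs
  imports "HOL-Analysis.Analysis"
begin

text \<open>Extended-real-valued functions on a Euclidean space (R^n), values in R \<union> {+\<infinity>}
  are modelled as ereal-valued functions that never take the value -\<infinity>.\<close>

definition proper_fun :: "('a \<Rightarrow> ereal) \<Rightarrow> bool" where
  "proper_fun f \<longleftrightarrow> (\<forall>x. f x \<noteq> -\<infinity>) \<and> (\<exists>x. f x < \<infinity>)"

definition epigraph :: "('a \<Rightarrow> ereal) \<Rightarrow> ('a \<times> real) set" where
  "epigraph f = {(x, t). f x \<le> ereal t}"

definition convex_fun :: "('a::real_vector \<Rightarrow> ereal) \<Rightarrow> bool" where
  "convex_fun f \<longleftrightarrow> convex (epigraph f)"

definition closed_fun :: "('a::topological_space \<Rightarrow> ereal) \<Rightarrow> bool" where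
  "closed_fun f \<longleftrightarrow> closed (epigraph f)"

definition weakly_convex :: "real \<Rightarrow> ('a::real_normed_vector \<Rightarrow> ereal) \<Rightarrow> bool" where
  "weakly_convex m f \<longleftrightarrow> convex_fun (\<lambda>x. f x + ereal (m / 2 * (norm x)\<^sup>2))"

definition moreau_env :: "real \<Rightarrow> ('a::real_normed_vector \<Rightarrow> ereal) \<Rightarrow> 'a \<Rightarrow> ereal" where
  "moreau_env \<mu> f z = (INF x. f x + ereal ((norm (x - z))\<^sup>2 / (2 * \<mu>)))"

definition is_prox :: "real \<Rightarrow> ('a::real_normed_vector \<Rightarrow> ereal) \<Rightarrow> 'a \<Rightarrow> 'a \<Rightarrow> bool" where
  "is_prox \<mu> f z x \<longleftrightarrow>
     (\<forall>y. f x + ereal ((norm (x - z))\<^sup>2 / (2 * \<mu>)) \<le> f y + ereal ((norm (y - z))\<^sup>2 / (2 * \<mu>)))"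

text \<open>Frechet (regular) subdifferential: liminf_{y \<rightarrow> x} (f y - f x - <v,y-x>)/|y-x| \<ge> 0.\<close>
definition frechet_subdiff :: "('a::real_inner \<Rightarrow> ereal) \<Rightarrow> 'a \<Rightarrow> 'a set" where
  "frechet_subdiff f x = {v. \<bar>f x\<bar> \<noteq> \<infinity> \<and>
     (\<forall>e>0. \<exists>d>0. \<forall>y. norm (y - x) < d \<longrightarrow>
        f x + ereal (v \<bullet> (y - x) - e * norm (y - x)) \<le> f y)}"

definition limiting_subdiff :: "('a::real_inner \<Rightarrow> ereal) \<Rightarrow> 'a \<Rightarrow> 'a set" where
  "limiting_subdiff f x = {v. \<bar>f x\<bar> \<noteq> \<infinity> \<and>
     (\<exists>xs vs. xs \<longlonglongrightarrow> x \<and> (\<lambda>k. f (xs k)) \<longlonglongrightarrow> f x \<and>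
        (\<forall>k. vs k \<in> frechet_subdiff f (xs k)) \<and> vs \<longlonglongrightarrow> v)}"

definition eps_critical ::
  "('a::real_inner \<Rightarrow> ereal) \<Rightarrow> ('a \<Rightarrow> ereal) \<Rightarrow> real \<Rightarrow> 'a \<Rightarrow> 'a \<Rightarrow> bool" where
  "eps_critical \<phi> g \<epsilon> x y \<longleftrightarrow>
     (\<exists>u. u \<in> {v - w | v w. v \<in> limiting_subdiff \<phi> x \<and> w \<in> limiting_subdiff g y} \<and>
          max (norm u) (norm (x - y)) \<le> \<epsilon>)"

end

theory Submission
  imports Defs
begin

lemma mid_id: fixes x y z :: "'a::real_inner"
  shows "(norm ((x+y)/\<^sub>R 2 - z))^2 = ((norm (x-z))^2 + (norm (y-z))^2)/2 - (norm (x-y))^2/4"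
  by (simp add: power2_norm_eq_inner inner_simps algebra_simps field_simps)

lemma shift_id: fixes x z h :: "'a::real_inner"
  shows "(norm (x - (z+h)))^2 = (norm (x-z))^2 - 2 * ((x - z) \<bullet> h) + (norm h)^2"
  by (simp add: power2_norm_eq_inner inner_simps algebra_simps inner_commute)

lemma prox_fin:
  assumes "proper_fun f" "is_prox \<mu> f z x"
  shows "\<bar>f x\<bar> \<noteq> \<infinity>"
proof -
  obtain x0 where x0: "f x0 < \<infinity>" using assms(1) unfolding proper_fun_def by auto
  have "f x + ereal ((norm (x - z))\<^sup>2 / (2 * \<mu>)) \<le> f x0 + ereal ((norm (x0 - z))\<^sup>2 / (2 * \<mu>))"
    using assms(2) unfolding is_prox_def by blast
  also have "\<dots> < \<infinity>" using x0 by simp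
  finally have "f x < \<infinity>" by (cases "f x") auto
  moreover have "f x \<noteq> -\<infinity>" using assms(1) unfolding proper_fun_def by auto
  ultimately show ?thesis by (cases "f x") auto
qed

lemma prox_frechet:
  fixes f :: "'a::real_inner \<Rightarrow> ereal"
  assumes "proper_fun f" "is_prox \<mu> f z x" "\<mu> > 0"
  shows "(z - x) /\<^sub>R \<mu> \<in> frechet_subdiff f x"
proof -
  have fin: "\<bar>f x\<bar> \<noteq> \<infinity>" using prox_fin[OF assms(1,2)] .
  then obtain r where r: "f x = ereal r" by (cases "f x") auto
  have "\<exists>d>0. \<forall>y. norm (y - x) < d \<longrightarrow>
        f x + ereal (((z - x) /\<^sub>R \<mu>) \<bullet> (y - x) - e * norm (y - x)) \<le> f y" if e: "e > 0" for e
  proof (intro exI[of _ "2*\<mu>*e"] conjI allI impI)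
    show "0 < 2*\<mu>*e" using e assms(3) by simp
    fix y assume y: "norm (y - x) < 2*\<mu>*e"
    show "f x + ereal (((z - x) /\<^sub>R \<mu>) \<bullet> (y - x) - e * norm (y - x)) \<le> f y"
    proof (cases "f y")
      case (real s)
      have P: "r + (norm (x - z))\<^sup>2 / (2 * \<mu>) \<le> s + (norm (y - z))\<^sup>2 / (2 * \<mu>)"
        using assms(2) r real unfolding is_prox_def by (metis plus_ereal.simps(1) ereal_less_eq(3))
      have id: "(norm (y - z))\<^sup>2 = (norm (y-x))^2 - 2 * ((y-x) \<bullet> (z - x)) + (norm (x - z))^2"
        using shift_id[of y x "z - x"] by (simp add: norm_minus_commute inner_commute algebra_simps)
      have q: "(norm (y-x))^2 \<le> 2*\<mu>*e * norm (y-x)"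
        using y by (simp add: power2_eq_square mult_right_mono)
      have "(norm (y-x))^2 / (2*\<mu>) \<le> e * norm (y-x)"
        using q assms(3) by (simp add: divide_simps mult.commute mult.left_commute)
      moreover have "((z - x) /\<^sub>R \<mu>) \<bullet> (y - x) = ((y-x) \<bullet> (z - x)) / \<mu>"
        by (simp add: inner_commute divide_inverse_commute)
      moreover have "(norm (y - z))\<^sup>2 / (2 * \<mu>) = (norm (y-x))^2 / (2*\<mu>) - ((y-x) \<bullet> (z - x)) / \<mu> + (norm (x - z))^2 / (2*\<mu>)"
        unfolding id using assms(3) by (simp add: add_divide_distrib diff_divide_distrib)
      ultimately have "r + (((z - x) /\<^sub>R \<mu>) \<bullet> (y - x) - e * norm (y - x)) \<le> s"
        using P by linarith
      then show ?thesis using r real by simp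
    qed (use r assms(1) in \<open>auto simp: proper_fun_def\<close>)
  qed
  then show ?thesis unfolding frechet_subdiff_def using fin by blast
qed

lemma prox_limiting:
  fixes f :: "'a::real_inner \<Rightarrow> ereal"
  assumes "proper_fun f" "is_prox \<mu> f z x" "\<mu> > 0"
  shows "(z - x) /\<^sub>R \<mu> \<in> limiting_subdiff f x"
  unfolding limiting_subdiff_def
  using prox_fin[OF assms(1,2)] prox_frechet[OF assms]
  by (intro CollectI conjI exI[of _ "\<lambda>k. x"] exI[of _ "\<lambda>k. (z - x) /\<^sub>R \<mu>"]) auto

lemma growth:
  fixes f :: "'a::real_inner \<Rightarrow> ereal"
  assumes cvx: "convex_fun (\<lambda>x. f x + ereal (a / 2 * (norm x)\<^sup>2))"
    and nm: "\<forall>x. f x \<noteq> -\<infinity>" and fx: "f xb = ereal r0"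
    and pr: "is_prox \<mu> f zb xb" and mu: "\<mu> > 0"
  shows "f x + ereal ((norm (x - zb))\<^sup>2 / (2 * \<mu>))
          \<ge> ereal (r0 + (norm (xb - zb))\<^sup>2 / (2 * \<mu>) + (1/\<mu> - a) / 4 * (norm (x - xb))^2)"
proof (cases "f x")
  case (real r)
  define mid where "mid = (x + xb) /\<^sub>R 2"
  have e1: "(x, r + a/2 * (norm x)^2) \<in> epigraph (\<lambda>x. f x + ereal (a / 2 * (norm x)\<^sup>2))"
    using real unfolding epigraph_def by simp
  have e2: "(xb, r0 + a/2 * (norm xb)^2) \<in> epigraph (\<lambda>x. f x + ereal (a / 2 * (norm x)\<^sup>2))"
    using fx unfolding epigraph_def by simp
  have "(1/2::real) *\<^sub>R (x, r + a/2 * (norm x)^2) + (1/2::real) *\<^sub>R (xb, r0 + a/2 * (norm xb)^2)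
        \<in> epigraph (\<lambda>x. f x + ereal (a / 2 * (norm x)\<^sup>2))"
    using cvx e1 e2 unfolding convex_fun_def by (intro convexD) auto
  then have "f mid + ereal (a / 2 * (norm mid)\<^sup>2) \<le> ereal ((r + a/2 * (norm x)^2 + (r0 + a/2 * (norm xb)^2)) / 2)"
    unfolding epigraph_def mid_def by (simp add: scaleR_add_right add_divide_distrib)
  moreover have "f mid \<noteq> -\<infinity>" using nm by blast
  ultimately obtain rm where rm: "f mid = ereal rm"
    and rmle: "rm + a / 2 * (norm mid)\<^sup>2 \<le> (r + a/2 * (norm x)^2 + (r0 + a/2 * (norm xb)^2)) / 2"
    by (cases "f mid") auto
  have "f xb + ereal ((norm (xb - zb))\<^sup>2 / (2 * \<mu>)) \<le> f mid + ereal ((norm (mid - zb))\<^sup>2 / (2 * \<mu>))"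
    using pr unfolding is_prox_def by blast
  then have P: "r0 + (norm (xb - zb))\<^sup>2 / (2 * \<mu>) \<le> rm + (norm (mid - zb))\<^sup>2 / (2 * \<mu>)"
    using fx rm by simp
  have m1: "(norm (mid - zb))^2 = ((norm (x-zb))^2 + (norm (xb-zb))^2)/2 - (norm (x-xb))^2/4"
    unfolding mid_def by (rule mid_id)
  have m2: "(norm mid)^2 = ((norm x)^2 + (norm xb)^2)/2 - (norm (x-xb))^2/4"
    using mid_id[of x xb 0] unfolding mid_def by simp
  have m1': "(norm (mid - zb))^2 / (2*\<mu>) = (norm (x-zb))^2 / (4*\<mu>) + (norm (xb-zb))^2 / (4*\<mu>) - (norm (x-xb))^2/(8*\<mu>)"
    unfolding m1 using mu by (simp add: field_simps)
  have h1: "(norm (x-zb))^2 / (4*\<mu>) = (norm (x-zb))^2 / (2*\<mu>) / 2" by simp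
  have h2: "(norm (xb-zb))^2 / (4*\<mu>) = (norm (xb-zb))^2 / (2*\<mu>) / 2" by simp
  have h3: "(1/\<mu> - a) / 4 * (norm (x - xb))^2 = (norm (x-xb))^2/(4*\<mu>) - a / 4 * (norm (x - xb))^2"
    using mu by (simp add: field_simps)
  have h4: "(norm (x-xb))^2/(8*\<mu>) = (norm (x-xb))^2/(4*\<mu>) / 2" by simp
  have "r0 + (norm (xb - zb))\<^sup>2 / (2 * \<mu>) + (1/\<mu> - a) / 4 * (norm (x - xb))^2 \<le> r + (norm (x - zb))\<^sup>2 / (2 * \<mu>)"
  proof -
    have "a / 2 * (norm mid)\<^sup>2 = a/4 * (norm x)^2 + a/4 * (norm xb)^2 - a/8 * (norm (x-xb))^2"
      unfolding m2 by (simp add: algebra_simps)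
    then have rmle': "rm \<le> (r+r0)/2 + a/8 * (norm (x-xb))^2" using rmle by (simp add: field_simps)
    define A where "A = (norm (x - zb))\<^sup>2 / (2 * \<mu>)"
    define B where "B = (norm (xb - zb))\<^sup>2 / (2 * \<mu>)"
    define C where "C = (norm (x - xb))\<^sup>2 / (4 * \<mu>)"
    define N where "N = (norm (x - xb))\<^sup>2"
    define Mz where "Mz = (norm (mid - zb))\<^sup>2 / (2 * \<mu>)"
    have Mzeq: "Mz = A/2 + B/2 - C/2" using m1' h1 h2 h4 unfolding A_def B_def C_def Mz_def by (simp only: m1' h1 h2 h4)
    define Q where "Q = (1/\<mu> - a) / 4 * N"
    define aN where "aN = a * N"
    have "Q = C - aN / 4" using h3 unfolding C_def N_def Q_def aN_def by simp
    moreover have "rm \<le> (r+r0)/2 + aN/8" using rmle' unfolding N_def aN_def by simp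
    moreover have "r0 + B \<le> rm + Mz" using P unfolding B_def Mz_def .
    ultimately have "r0 + B + Q \<le> r + A" using Mzeq by argo
    then have "r0 + B + (1/\<mu> - a) / 4 * N \<le> r + A" unfolding Q_def .
    then show ?thesis unfolding A_def B_def N_def .
  qed
  then show ?thesis using real by simp
qed (use nm in simp_all)

lemma quad_low:
  fixes c mu t s :: real
  assumes "c > 0" "mu > 0"
  shows "c * t^2 - t * s / mu \<ge> - (s^2 / (4 * c * mu^2))"
proof -
  have "0 \<le> (2*c*mu*t - s)^2" by simp
  also have "\<dots> = 4*c*mu^2 * (c * t^2 - t * s / mu + s^2 / (4 * c * mu^2))"
    using assms by (simp add: field_simps power2_eq_square)
  finally have "0 \<le> 4*c*mu^2 * (c * t^2 - t * s / mu + s^2 / (4 * c * mu^2))" .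
  moreover have "4*c*mu^2 > 0" using assms by simp
  ultimately have "0 \<le> c * t^2 - t * s / mu + s^2 / (4 * c * mu^2)"
    using zero_le_mult_iff by (metis not_less)
  then show ?thesis by linarith
qed

lemma env_lower:
  fixes f :: "'a::real_inner \<Rightarrow> ereal"
  assumes gr: "\<forall>x. f x + ereal ((norm (x - zb))\<^sup>2 / (2 * \<mu>)) \<ge> ereal (c0 + c * (norm (x - xb))^2)"
    and c: "c > 0" and mu: "\<mu> > 0"
  shows "moreau_env \<mu> f (zb + h) \<ge>
     ereal (c0 + ((zb - xb) \<bullet> h) / \<mu> + (norm h)^2 / (2*\<mu>) - (norm h)^2 / (4 * c * \<mu>^2))"
  unfolding moreau_env_def
proof (rule INF_greatest)
  fix x assume "x \<in> (UNIV :: 'a set)"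
  show "ereal (c0 + ((zb - xb) \<bullet> h) / \<mu> + (norm h)^2 / (2*\<mu>) - (norm h)^2 / (4 * c * \<mu>^2))
        \<le> f x + ereal ((norm (x - (zb + h)))\<^sup>2 / (2 * \<mu>))"
  proof (cases "f x")
    case (real r)
    have G: "c0 + c * (norm (x - xb))^2 \<le> r + (norm (x - zb))\<^sup>2 / (2 * \<mu>)"
      using gr[rule_format, of x] real by simp
    have S: "(norm (x - (zb + h)))\<^sup>2 / (2 * \<mu>) = (norm (x - zb))\<^sup>2 / (2 * \<mu>) - ((x - zb) \<bullet> h) / \<mu> + (norm h)^2 / (2*\<mu>)"
      unfolding shift_id using mu by (simp add: field_simps)
    have I: "(x - zb) \<bullet> h = (x - xb) \<bullet> h - (zb - xb) \<bullet> h"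
      by (simp add: inner_simps)
    have CS: "(x - xb) \<bullet> h \<le> norm (x - xb) * norm h" by (rule norm_cauchy_schwarz)
    have Q: "c * (norm (x - xb))^2 - norm (x - xb) * norm h / \<mu> \<ge> - ((norm h)^2 / (4 * c * \<mu>^2))"
      by (rule quad_low[OF c mu])
    have "((x - xb) \<bullet> h) / \<mu> \<le> norm (x - xb) * norm h / \<mu>"
      using CS mu by (simp add: divide_right_mono)
    moreover have "((x - zb) \<bullet> h) / \<mu> = ((x - xb) \<bullet> h) / \<mu> - ((zb - xb) \<bullet> h) / \<mu>"
      unfolding I by (simp add: diff_divide_distrib)
    ultimately have "c0 + ((zb - xb) \<bullet> h) / \<mu> + (norm h)^2 / (2*\<mu>) - (norm h)^2 / (4 * c * \<mu>^2)
        \<le> r + (norm (x - (zb + h)))\<^sup>2 / (2 * \<mu>)"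
      using G S Q by argo
    then show ?thesis using real by simp
  next
    case PInf then show ?thesis by simp
  next
    case MInf then show ?thesis using gr[rule_format, of x] by simp
  qed
qed

lemma env_upper:
  fixes f :: "'a::real_inner \<Rightarrow> ereal"
  assumes mu: "\<mu> > 0"
  shows "moreau_env \<mu> f (zb + h) \<le>
     f xb + ereal ((norm (xb - zb))\<^sup>2 / (2 * \<mu>) + ((zb - xb) \<bullet> h) / \<mu> + (norm h)^2 / (2*\<mu>))"
proof -
  have "moreau_env \<mu> f (zb + h) \<le> f xb + ereal ((norm (xb - (zb + h)))\<^sup>2 / (2 * \<mu>))"
    unfolding moreau_env_def by (rule INF_lower) simp
  also have "(norm (xb - (zb + h)))\<^sup>2 / (2 * \<mu>) = (norm (xb - zb))\<^sup>2 / (2 * \<mu>) + ((zb - xb) \<bullet> h) / \<mu> + (norm h)^2 / (2*\<mu>)"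
    unfolding shift_id using mu by (simp add: field_simps inner_simps)
  finally show ?thesis .
qed

lemma real_between:
  assumes "ereal a \<le> X" "X \<le> ereal b"
  shows "a \<le> real_of_ereal X \<and> real_of_ereal X \<le> b"
  using assms by (cases X) auto

lemma deriv_eq:
  fixes f :: "'a::real_inner \<Rightarrow> real"
  assumes D: "(f has_derivative (\<lambda>h. G \<bullet> h)) (at z)"
    and low: "\<forall>h. f (z + h) - f z \<ge> w \<bullet> h - K * (norm h)^2"
  shows "G = w"
proof -
  have key: "G \<bullet> d = w \<bullet> d" for d
  proof -
    have L: "((\<lambda>t. z + t *\<^sub>R d) has_derivative (\<lambda>s. s *\<^sub>R d)) (at (0::real))"
      by (auto intro!: derivative_eq_intros)
    have D': "(f has_derivative (\<lambda>h. G \<bullet> h)) (at (z + (0::real) *\<^sub>R d))" using D by simp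
    have "((\<lambda>t. f (z + t *\<^sub>R d)) has_derivative (\<lambda>s. G \<bullet> (s *\<^sub>R d))) (at (0::real))"
      using has_derivative_compose[OF L D'] by simp
    then have P: "((\<lambda>t. f (z + t *\<^sub>R d)) has_real_derivative (G \<bullet> d)) (at 0)"
      unfolding has_field_derivative_def
    proof -
      assume H: "((\<lambda>t. f (z + t *\<^sub>R d)) has_derivative (\<lambda>s. G \<bullet> (s *\<^sub>R d))) (at 0)"
      have "(\<lambda>s. G \<bullet> (s *\<^sub>R d)) = (*) (G \<bullet> d)" by (rule ext) simp
      then show "((\<lambda>t. f (z + t *\<^sub>R d)) has_derivative (*) (G \<bullet> d)) (at 0)" using H by simp
    qed
    define N where "N = (norm d)^2"
    define b where "b = w \<bullet> d"
    have Q: "((\<lambda>t. f (z + t *\<^sub>R d) - t * b + K * N * t^2) has_real_derivative (G \<bullet> d - b)) (at 0)"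
    proof -
      have Q1: "((\<lambda>t. t * b) has_real_derivative b) (at 0)"
        by (auto intro!: derivative_eq_intros)
      have Q2: "((\<lambda>t. K * N * t^2) has_real_derivative 0) (at 0)"
        by (auto intro!: derivative_eq_intros)
      show ?thesis using DERIV_add[OF DERIV_diff[OF P Q1] Q2] by simp
    qed
    have "G \<bullet> d - b = 0"
    proof (rule DERIV_local_min[OF Q, of 1])
      show "\<forall>y. \<bar>0 - y\<bar> < 1 \<longrightarrow> f (z + 0 *\<^sub>R d) - 0 * b + K * N * 0^2 \<le> f (z + y *\<^sub>R d) - y * b + K * N * y^2"
      proof (intro allI impI)
        fix y :: real
        have L0: "f (z + y *\<^sub>R d) - f z \<ge> w \<bullet> (y *\<^sub>R d) - K * (norm (y *\<^sub>R d))^2" using low by blast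
        have wb: "w \<bullet> (y *\<^sub>R d) = y * b" unfolding b_def by simp
        have nb: "(norm (y *\<^sub>R d))^2 = N * y^2" unfolding N_def by (simp add: power_mult_distrib)
        have A: "f (z + y *\<^sub>R d) - f z \<ge> y * b - K * (N * y^2)" using L0 by (simp only: wb nb)
        have E: "f (z + 0 *\<^sub>R d) - 0 * b + K * N * 0^2 = f z" by simp
        have E2: "K * (N * y^2) = K * N * y^2" by simp
        show "f (z + 0 *\<^sub>R d) - 0 * b + K * N * 0^2 \<le> f (z + y *\<^sub>R d) - y * b + K * N * y^2"
          unfolding E using A E2 by linarith
      qed
    qed simp
    then show ?thesis unfolding b_def by simp
  qed
  have "(G - w) \<bullet> (G - w) = 0" using key[of "G - w"] by (simp add: inner_diff_left)
  then show ?thesis by simp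
qed

theorem proposition2p1:
  fixes \<phi> g :: "'a::euclidean_space \<Rightarrow> ereal"
    and m \<mu> \<epsilon> :: real and zbar xbar ybar G :: 'a
  assumes "m \<ge> 0" and "weakly_convex m \<phi>" and "proper_fun \<phi>"
    and "proper_fun g" and "closed_fun g" and "convex_fun g"
    and "\<epsilon> > 0" and "\<mu> > 0" and "m * \<mu> < 1"
    and "((\<lambda>z. real_of_ereal (moreau_env \<mu> \<phi> z) - real_of_ereal (moreau_env \<mu> g z))
           has_derivative (\<lambda>h. G \<bullet> h)) (at zbar)"
    and "norm G \<le> min 1 (1 / \<mu>) * \<epsilon>"
    and "is_prox \<mu> \<phi> zbar xbar" and "is_prox \<mu> g zbar ybar"
  shows "eps_critical \<phi> g \<epsilon> xbar ybar"
proof -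
  note mu = \<open>\<mu> > 0\<close>
  obtain rx where rx: "\<phi> xbar = ereal rx" using prox_fin[OF assms(3,12)] by (cases "\<phi> xbar") auto
  obtain ry where ry: "g ybar = ereal ry" using prox_fin[OF assms(4,13)] by (cases "g ybar") auto
  have nmp: "\<forall>x. \<phi> x \<noteq> -\<infinity>" using assms(3) unfolding proper_fun_def by auto
  have nmg: "\<forall>x. g x \<noteq> -\<infinity>" using assms(4) unfolding proper_fun_def by auto
  define c1 where "c1 = (1/\<mu> - m) / 4"
  define c2 where "c2 = (1/\<mu> - 0) / 4"
  have "m < 1/\<mu>" using assms(9) mu by (simp add: field_simps)
  then have c1p: "c1 > 0" unfolding c1_def by simp
  have c2p: "c2 > 0" unfolding c2_def using mu by simp
  define Fp where "Fp = rx + (norm (xbar - zbar))\<^sup>2 / (2 * \<mu>)"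
  define Fg where "Fg = ry + (norm (ybar - zbar))\<^sup>2 / (2 * \<mu>)"
  have cvp: "convex_fun (\<lambda>x. \<phi> x + ereal (m / 2 * (norm x)\<^sup>2))"
    using assms(2) unfolding weakly_convex_def .
  have cvg: "convex_fun (\<lambda>x. g x + ereal (0 / 2 * (norm x)\<^sup>2))"
    using assms(6) by simp
  have grp: "\<forall>x. \<phi> x + ereal ((norm (x - zbar))\<^sup>2 / (2 * \<mu>)) \<ge> ereal (Fp + c1 * (norm (x - xbar))^2)"
    using growth[OF cvp nmp rx assms(12) mu] unfolding Fp_def c1_def by blast
  have grg: "\<forall>x. g x + ereal ((norm (x - zbar))\<^sup>2 / (2 * \<mu>)) \<ge> ereal (Fg + c2 * (norm (x - ybar))^2)"
    using growth[OF cvg nmg ry assms(13) mu] unfolding Fg_def c2_def by blast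
  define Lp where "Lp = (\<lambda>h. Fp + ((zbar - xbar) \<bullet> h) / \<mu> + (norm h)^2 / (2*\<mu>) - (norm h)^2 / (4 * c1 * \<mu>^2))"
  define Up where "Up = (\<lambda>h. Fp + ((zbar - xbar) \<bullet> h) / \<mu> + (norm h)^2 / (2*\<mu>))"
  define Lg where "Lg = (\<lambda>h. Fg + ((zbar - ybar) \<bullet> h) / \<mu> + (norm h)^2 / (2*\<mu>) - (norm h)^2 / (4 * c2 * \<mu>^2))"
  define Ug where "Ug = (\<lambda>h. Fg + ((zbar - ybar) \<bullet> h) / \<mu> + (norm h)^2 / (2*\<mu>))"
  have bp: "Lp h \<le> real_of_ereal (moreau_env \<mu> \<phi> (zbar + h)) \<and> real_of_ereal (moreau_env \<mu> \<phi> (zbar + h)) \<le> Up h" for h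
  proof (rule real_between)
    show "ereal (Lp h) \<le> moreau_env \<mu> \<phi> (zbar + h)"
      unfolding Lp_def by (rule env_lower[OF grp c1p mu])
    show "moreau_env \<mu> \<phi> (zbar + h) \<le> ereal (Up h)"
      using env_upper[OF mu, of \<phi> zbar h xbar] unfolding Up_def Fp_def rx by (simp add: add.assoc)
  qed
  have bg: "Lg h \<le> real_of_ereal (moreau_env \<mu> g (zbar + h)) \<and> real_of_ereal (moreau_env \<mu> g (zbar + h)) \<le> Ug h" for h
  proof (rule real_between)
    show "ereal (Lg h) \<le> moreau_env \<mu> g (zbar + h)"
      unfolding Lg_def by (rule env_lower[OF grg c2p mu])
    show "moreau_env \<mu> g (zbar + h) \<le> ereal (Ug h)"
      using env_upper[OF mu, of g zbar h ybar] unfolding Ug_def Fg_def ry by (simp add: add.assoc)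
  qed
  define \<Psi> where "\<Psi> = (\<lambda>z. real_of_ereal (moreau_env \<mu> \<phi> z) - real_of_ereal (moreau_env \<mu> g z))"
  define w where "w = (ybar - xbar) /\<^sub>R \<mu>"
  define K where "K = 1 / (4 * c1 * \<mu>^2)"
  have low: "\<forall>h. \<Psi> (zbar + h) - \<Psi> zbar \<ge> w \<bullet> h - K * (norm h)^2"
  proof
    fix h :: 'a
    have a1: "Lp h \<le> real_of_ereal (moreau_env \<mu> \<phi> (zbar + h))" using bp by blast
    have a2: "real_of_ereal (moreau_env \<mu> g (zbar + h)) \<le> Ug h" using bg by blast
    have a3: "real_of_ereal (moreau_env \<mu> \<phi> (zbar + 0)) \<le> Up 0" using bp by blast
    have a4: "Lg 0 \<le> real_of_ereal (moreau_env \<mu> g (zbar + 0))" using bg by blast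
    have u0: "Up 0 = Fp" "Lg 0 = Fg" unfolding Up_def Lg_def by simp_all
    have wi: "w \<bullet> h = ((zbar - xbar) \<bullet> h) / \<mu> - ((zbar - ybar) \<bullet> h) / \<mu>"
      unfolding w_def by (simp add: inner_simps diff_divide_distrib divide_inverse_commute right_diff_distrib)
    have ki: "K * (norm h)^2 = (norm h)^2 / (4 * c1 * \<mu>^2)" unfolding K_def by simp
    have e1: "Lp h - Ug h - Fp + Fg = w \<bullet> h - K * (norm h)^2"
      unfolding Lp_def Ug_def wi ki by (simp add: algebra_simps)
    have z0: "zbar + 0 = zbar" by simp
    show "\<Psi> (zbar + h) - \<Psi> zbar \<ge> w \<bullet> h - K * (norm h)^2"
      using a1 a2 a3 a4 e1 unfolding \<Psi>_def z0 u0 by linarith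
  qed
  have D: "(\<Psi> has_derivative (\<lambda>h. G \<bullet> h)) (at zbar)" using assms(10) unfolding \<Psi>_def .
  have Gw: "G = w" by (rule deriv_eq[OF D low])
  define u where "u = (zbar - xbar) /\<^sub>R \<mu> - (zbar - ybar) /\<^sub>R \<mu>"
  have uG: "u = G" unfolding Gw u_def w_def by (simp add: algebra_simps scaleR_diff_right)
  have u_in: "u \<in> {v - w | v w. v \<in> limiting_subdiff \<phi> xbar \<and> w \<in> limiting_subdiff g ybar}"
    unfolding u_def using prox_limiting[OF assms(3,12) mu] prox_limiting[OF assms(4,13) mu] by blast
  have n1: "norm u \<le> \<epsilon>"
  proof -
    have "min 1 (1/\<mu>) * \<epsilon> \<le> 1 * \<epsilon>"
      by (rule mult_right_mono) (use assms(7) in auto)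
    then show ?thesis using uG assms(11) by simp
  qed
  have "xbar - ybar = - (\<mu> *\<^sub>R G)" unfolding Gw w_def using mu by simp
  then have "norm (xbar - ybar) = \<mu> * norm G" using mu by simp
  also have "\<dots> \<le> \<mu> * (1/\<mu> * \<epsilon>)"
  proof -
    have "min 1 (1/\<mu>) * \<epsilon> \<le> (1/\<mu>) * \<epsilon>"
      by (rule mult_right_mono) (use assms(7) in auto)
    then have "norm G \<le> 1/\<mu> * \<epsilon>" using assms(11) by linarith
    then show ?thesis by (rule mult_left_mono) (use mu in simp)
  qed
  also have "\<dots> = \<epsilon>" using mu by simp
  finally have n2: "norm (xbar - ybar) \<le> \<epsilon>" .
  show ?thesis unfolding eps_critical_def using u_in n1 n2 by auto
qed

end
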